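(* Let $\mathcal{G}$ be a $k$-uniform hypergraph. Then the following are equivalent: (1) $\mathcal{G}$ is connected; (2) $\alpha_j(\mathcal{G})>0$ for all $j\in V(\mathcal{G})$; (3) $\alpha_j(\mathcal{G})>0$ for some $j\in V(\mathcal{G})$.
   Context: A $k$-uniform hypergraph $\mathcal{G}$ has a finite vertex set $V(\mathcal{G})=[n]$ and an edge set $E(\mathcal{G})$ of $k$-element subsets of $V(\mathcal{G})$. For $\mathbf{x}\in\mathbb{R}^n$, the Laplacian form is $\mathcal{L}_\mathcal{G}\mathbf{x}^k=\sum_{\{i_1,\ldots,i_k\}\in E(\mathcal{G})}\left(x_{i_1}^k+\cdots+x_{i_k}^k-k\,x_{i_1}\cdots x_{i_k}\right)$ (this is $\mathcal{L}_\mathcal{G}=\mathcal{D}_\mathcal{G}-\mathcal{A}_\mathcal{G}$ applied to $\mathbf{x}^k$, where $\mathcal{D}_\mathcal{G}$ is the diagonal degree tensor and $\mathcal{A}_\mathcal{G}$ the adjacency tensor with entries $1/(k-1)!$ on edges). The inverse Perron value of a vertex $j$ is $\alpha_j(\mathcal{G})=\min\{\mathcal{L}_\mathcal{G}\mathbf{x}^k : \mathbf{x}\in\mathbb{R}^n_+,\ \sum_{i=1}^n x_i^k=1,\ x_j=0\}$, where $\mathbb{R}^n_+$ is the set of nonnegative vectors. A path is an alternating sequence $v_0e_1v_1\cdots e_lv_l$ of distinct vertices and distinct edges with $v_{i-1},v_i\in e_i$; $\mathcal{G}$ is connected if any two vertices are joined by a path. *)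

theory Defs
  imports "HOL-Analysis.Analysis"
begin

definition uniform_hypergraph :: "nat \<Rightarrow> nat \<Rightarrow> nat set set \<Rightarrow> bool" where
  "uniform_hypergraph n k E \<longleftrightarrow> (\<forall>e\<in>E. e \<subseteq> {1..n} \<and> card e = k)"

definition laplacian_form :: "nat \<Rightarrow> nat set set \<Rightarrow> (nat \<Rightarrow> real) \<Rightarrow> real" where
  "laplacian_form k E x = (\<Sum>e\<in>E. (\<Sum>i\<in>e. x i ^ k) - real k * (\<Prod>i\<in>e. x i))"

definition hg_path :: "nat set set \<Rightarrow> nat list \<Rightarrow> nat set list \<Rightarrow> bool" where
  "hg_path E vs es \<longleftrightarrow> vs \<noteq> [] \<and> length es + 1 = length vs \<and> distinct vs \<and> distinct es \<and>
     (\<forall>i<length es. es ! i \<in> E \<and> vs ! i \<in> es ! i \<and> vs ! Suc i \<in> es ! i)"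

definition hg_connected :: "nat \<Rightarrow> nat set set \<Rightarrow> bool" where
  "hg_connected n E \<longleftrightarrow> (\<forall>u\<in>{1..n}. \<forall>v\<in>{1..n}. \<exists>vs es. hg_path E vs es \<and> hd vs = u \<and> last vs = v)"

text \<open>Inverse Perron value alpha_j(G): the minimum (attained, by compactness) of the Laplacian form
  over nonnegative x with sum x_i^k = 1 and x_j = 0; written as the infimum of this value set.\<close>
definition inv_perron :: "nat \<Rightarrow> nat \<Rightarrow> nat set set \<Rightarrow> nat \<Rightarrow> real" where
  "inv_perron n k E j = Inf (laplacian_form k E ` {x. (\<forall>i\<in>{1..n}. x i \<ge> 0) \<and>
       (\<Sum>i\<in>{1..n}. x i ^ k) = 1 \<and> x j = 0})"

end

theory Submission
  imports Defs
begin

lemma amgm: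
  fixes a :: "'a \<Rightarrow> real"
  assumes fin: "finite e" and ck: "card e = k" and k1: "k \<ge> 1" and nn: "\<forall>i\<in>e. a i \<ge> 0"
  shows "real k * (\<Prod>i\<in>e. a i) \<le> (\<Sum>i\<in>e. a i ^ k)"
proof (cases "\<exists>i\<in>e. a i = 0")
  case True
  then have "(\<Prod>i\<in>e. a i) = 0" using fin by auto
  moreover have "(\<Sum>i\<in>e. a i ^ k) \<ge> 0" using nn by (intro sum_nonneg) auto
  ultimately show ?thesis by simp
next
  case False
  then have pos: "\<forall>i\<in>e. a i > 0" using nn by force
  have ne: "e \<noteq> {}" using ck k1 by auto
  have ws: "(\<Sum>i\<in>e. 1 / real k) = 1" using ck k1 by simp
  have "exp (\<Sum>i\<in>e. (1/real k) *\<^sub>R (real k * ln (a i))) \<le> (\<Sum>i\<in>e. (1/real k) * exp (real k * ln (a i)))"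
    by (rule convex_on_sum[OF fin ne exp_convex ws]) auto
  moreover have "(\<Sum>i\<in>e. (1/real k) *\<^sub>R (real k * ln (a i))) = (\<Sum>i\<in>e. ln (a i))"
    using k1 by (intro sum.cong) auto
  moreover have "exp (\<Sum>i\<in>e. ln (a i)) = (\<Prod>i\<in>e. a i)"
    using fin pos by (simp add: exp_sum)
  moreover have "(\<Sum>i\<in>e. (1/real k) * exp (real k * ln (a i))) = (1/real k) * (\<Sum>i\<in>e. a i ^ k)"
    using pos by (simp add: sum_distrib_left exp_of_nat_mult)
  ultimately have "(\<Prod>i\<in>e. a i) \<le> (1/real k) * (\<Sum>i\<in>e. a i ^ k)" by simp
  then show ?thesis using k1 by (simp add: field_simps)
qed

lemma pow_convex2:
  fixes a b :: real
  assumes "a \<ge> 0" "b \<ge> 0"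
  shows "2 * ((a + b) / 2) ^ k \<le> a ^ k + b ^ k"
proof -
  have c: "convex_on {0..} (\<lambda>x::real. x ^ k)"
  proof (cases "even k")
    case True then show ?thesis using convex_power_even convex_on_subset by blast
  next
    case False then show ?thesis using convex_power_odd by blast
  qed
  have "((1 - 1/2) *\<^sub>R a + (1/2) *\<^sub>R b) ^ k \<le> (1 - 1/2) * a ^ k + (1/2) * b ^ k"
    using convex_onD[OF c, of "1/2" a b] assms by simp
  moreover have "(1 - 1/2) *\<^sub>R a + (1/2) *\<^sub>R b = (a + b) / 2" by simp
  ultimately show ?thesis by (simp add: add_divide_distrib)
qed

lemma sum_split2:
  fixes f :: "'a \<Rightarrow> real"
  assumes "finite e" "p \<in> e" "q \<in> e" "p \<noteq> q"
  shows "sum f e = f p + f q + sum f (e - {p, q})"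
proof -
  have "sum f e = f p + sum f (e - {p})" using assms by (simp add: sum.remove)
  also have "sum f (e - {p}) = f q + sum f (e - {p} - {q})" using assms by (simp add: sum.remove)
  moreover have "e - {p} - {q} = e - {p, q}" by auto
  ultimately show ?thesis by (simp add: algebra_simps)
qed

lemma prod_split2:
  fixes f :: "'a \<Rightarrow> real"
  assumes "finite e" "p \<in> e" "q \<in> e" "p \<noteq> q"
  shows "prod f e = f p * f q * prod f (e - {p, q})"
proof -
  have "prod f e = f p * prod f (e - {p})" using assms by (simp add: prod.remove)
  also have "prod f (e - {p}) = f q * prod f (e - {p} - {q})" using assms by (simp add: prod.remove)
  moreover have "e - {p} - {q} = e - {p, q}" by auto
  ultimately show ?thesis by (simp add: algebra_simps)
qed

lemma amgm_strict:
  fixes a :: "'a \<Rightarrow> real"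
  assumes fin: "finite e" and ck: "card e = k" and k1: "k \<ge> 1" and nn: "\<forall>i\<in>e. a i \<ge> 0"
    and p: "p \<in> e" and q: "q \<in> e" and pq: "a p \<noteq> a q"
  shows "real k * (\<Prod>i\<in>e. a i) < (\<Sum>i\<in>e. a i ^ k)"
proof -
  have pnq: "p \<noteq> q" using pq by auto
  define m where "m = (a p + a q) / 2"
  define c where "c = a(p := m, q := m)"
  define e' where "e' = e - {p, q}"
  have ce': "\<forall>i\<in>e'. c i = a i" by (auto simp: c_def e'_def)
  define R where "R = (\<Prod>i\<in>e'. a i)"
  define S where "S = (\<Sum>i\<in>e'. a i ^ k)"
  have pa: "(\<Prod>i\<in>e. a i) = a p * a q * R"
    unfolding R_def e'_def by (rule prod_split2[OF fin p q pnq])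
  have sa: "(\<Sum>i\<in>e. a i ^ k) = a p ^ k + a q ^ k + S"
    unfolding S_def e'_def by (rule sum_split2[OF fin p q pnq])
  have pc: "(\<Prod>i\<in>e. c i) = m * m * R"
  proof -
    have "(\<Prod>i\<in>e. c i) = c p * c q * (\<Prod>i\<in>e'. c i)"
      unfolding e'_def by (rule prod_split2[OF fin p q pnq])
    also have "(\<Prod>i\<in>e'. c i) = R" unfolding R_def using ce' by simp
    finally show ?thesis using pnq by (simp add: c_def)
  qed
  have sc: "(\<Sum>i\<in>e. c i ^ k) = 2 * m ^ k + S"
  proof -
    have "(\<Sum>i\<in>e. c i ^ k) = c p ^ k + c q ^ k + (\<Sum>i\<in>e'. c i ^ k)"
      unfolding e'_def by (rule sum_split2[OF fin p q pnq])
    also have "(\<Sum>i\<in>e'. c i ^ k) = S" unfolding S_def using ce' by simp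
    finally show ?thesis using pnq by (simp add: c_def)
  qed
  have Rn: "R \<ge> 0" unfolding R_def using nn by (intro prod_nonneg) (auto simp: e'_def)
  have Sn: "S \<ge> 0" unfolding S_def using nn by (intro sum_nonneg) (auto simp: e'_def)
  have ap: "a p \<ge> 0" "a q \<ge> 0" using nn p q by auto
  show ?thesis
  proof (cases "R = 0")
    case True
    have "0 < max (a p) (a q)" using ap pq by auto
    then have "0 < a p ^ k + a q ^ k"
      using ap by (cases "a p \<le> a q") (auto simp: max_def add_pos_nonneg add_nonneg_pos)
    then show ?thesis using pa sa True Sn by simp
  next
    case False
    then have Rp: "R > 0" using Rn by simp
    have "a p * a q < m * m"
    proof -
      have "0 < (a p - a q)^2" using pq by simp
      then show ?thesis unfolding m_def by (simp add: power2_eq_square field_simps)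
    qed
    then have "real k * (a p * a q * R) < real k * (m * m * R)"
      using Rp k1 by simp
    also have "\<dots> \<le> (\<Sum>i\<in>e. c i ^ k)"
    proof -
      have "real k * (\<Prod>i\<in>e. c i) \<le> (\<Sum>i\<in>e. c i ^ k)"
        by (rule amgm[OF fin ck k1]) (use nn ap in \<open>auto simp: c_def m_def\<close>)
      then show ?thesis using pc by simp
    qed
    also have "\<dots> \<le> (\<Sum>i\<in>e. a i ^ k)"
      using sc sa pow_convex2[OF ap] by (simp add: m_def)
    finally show ?thesis using pa by simp
  qed
qed


definition adj :: "nat set set \<Rightarrow> nat \<Rightarrow> nat \<Rightarrow> bool" where
  "adj E u v \<longleftrightarrow> (\<exists>e\<in>E. u \<in> e \<and> v \<in> e)"

lemma path_single: "hg_path E [u] []"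
  by (simp add: hg_path_def)

lemma path_extend:
  assumes P: "hg_path E vs es" and e: "e \<in> E" "last vs \<in> e" "w \<in> e"
  shows "\<exists>vs' es'. hg_path E vs' es' \<and> hd vs' = hd vs \<and> last vs' = w"
proof -
  from P have ne: "vs \<noteq> []" and len: "length es + 1 = length vs" and dv: "distinct vs"
    and de: "distinct es" and ed: "\<forall>i<length es. es!i \<in> E \<and> vs!i \<in> es!i \<and> vs!Suc i \<in> es!i"
    unfolding hg_path_def by auto
  show ?thesis
  proof (cases "w \<in> set vs")
    case True
    then obtain i where i: "i < length vs" "vs!i = w" by (auto simp: in_set_conv_nth)
    let ?vs = "take (Suc i) vs" and ?es = "take i es"
    have "hg_path E ?vs ?es" unfolding hg_path_def
    proof (intro conjI allI impI)
      show "?vs \<noteq> []" using ne by simp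
      show "length ?es + 1 = length ?vs" using i len by simp
      show "distinct ?vs" using dv by simp
      show "distinct ?es" using de by simp
      fix l assume l: "l < length ?es"
      then have l2: "l < i" "l < length es" by auto
      then show "?es ! l \<in> E" "?vs ! l \<in> ?es ! l" "?vs ! Suc l \<in> ?es ! l"
        using ed by auto
    qed
    moreover have "hd ?vs = hd vs" by simp
    moreover have "last ?vs = w" using i by (simp add: take_Suc_conv_app_nth)
    ultimately show ?thesis by blast
  next
    case False
    define i where "i = (LEAST i. i < length vs \<and> vs!i \<in> e)"
    have ex: "length vs - 1 < length vs \<and> vs!(length vs - 1) \<in> e"
      using ne e(2) by (simp add: last_conv_nth)
    have i: "i < length vs \<and> vs!i \<in> e" unfolding i_def by (rule LeastI, rule ex)
    have mn: "vs!l \<notin> e" if "l < i" for l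
    proof
      assume "vs!l \<in> e"
      moreover have "l < length vs" using that i by simp
      ultimately have "i \<le> l" unfolding i_def by (intro Least_le) simp
      then show False using that by simp
    qed
    let ?vs = "take (Suc i) vs @ [w]" and ?es = "take i es @ [e]"
    have ile: "i \<le> length es" using i len by simp
    have eni: "e \<notin> set (take i es)"
    proof
      assume "e \<in> set (take i es)"
      then obtain l where l: "l < length (take i es)" "take i es ! l = e" by (auto simp: in_set_conv_nth)
      then have "l < i" "l < length es" "es ! l = e" by auto
      then have "vs ! l \<in> es ! l" using ed by blast
      then have "vs ! l \<in> e" using \<open>es ! l = e\<close> by simp
      then show False using mn \<open>l < i\<close> by blast
    qed
    have "hg_path E ?vs ?es" unfolding hg_path_def
    proof (intro conjI)
      show "?vs \<noteq> []" by simp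
      show "length ?es + 1 = length ?vs" using i ile by simp
      show "distinct ?vs" using dv False by (auto dest: in_set_takeD)
      show "distinct ?es" using de eni by simp
      show "\<forall>l<length ?es. ?es ! l \<in> E \<and> ?vs ! l \<in> ?es ! l \<and> ?vs ! Suc l \<in> ?es ! l"
      proof (intro allI impI)
      fix l assume l: "l < length ?es"
      then have "l < Suc i" using ile by simp
      show "?es ! l \<in> E \<and> ?vs ! l \<in> ?es ! l \<and> ?vs ! Suc l \<in> ?es ! l"
      proof (cases "l < i")
        case True
        then have "l < length es" using ile by simp
        then show ?thesis using ed True ile i by (auto simp: nth_append)
      next
        case False
        then have "l = i" using \<open>l < Suc i\<close> by simp
        then show ?thesis using e i ile by (auto simp: nth_append)
      qed
      qed
    qed
    moreover have "hd ?vs = hd vs" using ne by (simp add: hd_append)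
    moreover have "last ?vs = w" by simp
    ultimately show ?thesis by blast
  qed
qed

lemma walk_path:
  assumes "(adj E)\<^sup>*\<^sup>* u v"
  shows "\<exists>vs es. hg_path E vs es \<and> hd vs = u \<and> last vs = v"
  using assms
proof (induction rule: rtranclp_induct)
  case base
  have "hg_path E [u] [] \<and> hd [u] = u \<and> last [u] = u" by (simp add: path_single)
  then show ?case by blast
next
  case (step y z)
  then obtain vs es where p: "hg_path E vs es" "hd vs = u" "last vs = y" by blast
  from step(2) obtain e where "e \<in> E" "y \<in> e" "z \<in> e" unfolding adj_def by blast
  then obtain vs' es' where "hg_path E vs' es'" "hd vs' = hd vs" "last vs' = z"
    using path_extend[OF p(1), of e z] p(3) by blast
  then show ?case using p(2) by blast
qed

lemma adj_sym: "(adj E)\<^sup>*\<^sup>* u v \<Longrightarrow> (adj E)\<^sup>*\<^sup>* v u"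
proof (induction rule: rtranclp_induct)
  case base then show ?case by simp
next
  case (step y z)
  then have "adj E z y" unfolding adj_def by blast
  then show ?case using step(3) by (rule converse_rtranclp_into_rtranclp)
qed

lemma path_const:
  assumes P: "hg_path E vs es" and c: "\<forall>e\<in>E. \<forall>a\<in>e. \<forall>b\<in>e. x a = x b"
  shows "x (last vs) = x (hd vs)"
proof -
  from P have ne: "vs \<noteq> []" and len: "length es + 1 = length vs"
    and ed: "\<forall>i<length es. es!i \<in> E \<and> vs!i \<in> es!i \<and> vs!Suc i \<in> es!i"
    unfolding hg_path_def by auto
  have h: "i < length vs \<Longrightarrow> x (vs ! i) = x (vs ! 0)" for i
  proof (induction i)
    case 0 then show ?case by simp
  next
    case (Suc i)
    then have "i < length es" using len by simp
    then have "x (vs ! Suc i) = x (vs ! i)" using ed c by blast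
    then show ?case using Suc by simp
  qed
  have "x (vs ! (length vs - 1)) = x (vs ! 0)" using ne by (intro h) simp
  then show ?thesis by (simp only: last_conv_nth[OF ne] hd_conv_nth[OF ne])
qed


lemma cont_coord [continuous_intros]: "continuous_on A (\<lambda>x::'a \<Rightarrow> 'b::topological_space. x i)"
  by (rule continuous_on_subset[OF continuous_on_product_coordinates]) simp

lemma finE: "uniform_hypergraph n k E \<Longrightarrow> finite E"
  unfolding uniform_hypergraph_def
  by (rule finite_subset[of E "Pow {1..n}"]) auto

lemma edge_props:
  assumes "uniform_hypergraph n k E" "k \<ge> 1" "e \<in> E"
  shows "e \<subseteq> {1..n}" "card e = k" "finite e" "e \<noteq> {}"
proof -
  show "e \<subseteq> {1..n}" "card e = k" using assms unfolding uniform_hypergraph_def by auto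
  then show "finite e" "e \<noteq> {}" using assms(2) by (auto intro: card_ge_0_finite)
qed

lemma term_nonneg:
  assumes H: "uniform_hypergraph n k E" and k: "k \<ge> 1" and e: "e \<in> E"
    and nn: "\<forall>i\<in>{1..n}. x i \<ge> 0"
  shows "(\<Sum>i\<in>e. x i ^ k) - real k * (\<Prod>i\<in>e. x i) \<ge> 0"
proof -
  note ep = edge_props[OF H k e]
  have "real k * (\<Prod>i\<in>e. x i) \<le> (\<Sum>i\<in>e. x i ^ k)"
    by (rule amgm[OF ep(3) ep(2) k]) (use ep(1) nn in auto)
  then show ?thesis by simp
qed

lemma lap_nonneg:
  assumes H: "uniform_hypergraph n k E" and k: "k \<ge> 1"
    and nn: "\<forall>i\<in>{1..n}. x i \<ge> 0"
  shows "laplacian_form k E x \<ge> 0"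
  unfolding laplacian_form_def
  by (rule sum_nonneg) (rule term_nonneg[OF H k _ nn])

definition Sset :: "nat \<Rightarrow> nat \<Rightarrow> nat \<Rightarrow> (nat \<Rightarrow> real) set" where
  "Sset n k j = {x. (\<forall>i\<in>{1..n}. x i \<ge> 0) \<and> (\<Sum>i\<in>{1..n}. x i ^ k) = 1 \<and> x j = 0}"

lemma inv_perron_S: "inv_perron n k E j = Inf (laplacian_form k E ` Sset n k j)"
  by (simp add: inv_perron_def Sset_def)

lemma bdd:
  assumes H: "uniform_hypergraph n k E" and k: "k \<ge> 1"
  shows "bdd_below (laplacian_form k E ` Sset n k j)"
  by (rule bdd_belowI[of _ 0]) (use lap_nonneg[OF H k] in \<open>auto simp: Sset_def\<close>)

lemma disc:
  assumes H: "uniform_hypergraph n k E" and k2: "k \<ge> 2" and nc: "\<not> hg_connected n E"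
  shows "inv_perron n k E j \<le> 0"
proof -
  have k: "k \<ge> 1" using k2 by simp
  obtain u v where uv: "u \<in> {1..n}" "v \<in> {1..n}"
    "\<not> (\<exists>vs es. hg_path E vs es \<and> hd vs = u \<and> last vs = v)"
    using nc unfolding hg_connected_def by blast
  then have nuv: "\<not> (adj E)\<^sup>*\<^sup>* u v" using walk_path by blast
  obtain b where b: "b \<in> {1..n}" "\<not> (adj E)\<^sup>*\<^sup>* b j"
  proof (cases "(adj E)\<^sup>*\<^sup>* u j")
    case True
    have "\<not> (adj E)\<^sup>*\<^sup>* v j"
    proof
      assume "(adj E)\<^sup>*\<^sup>* v j"
      then have "(adj E)\<^sup>*\<^sup>* j v" by (rule adj_sym)
      with True have "(adj E)\<^sup>*\<^sup>* u v" by (rule rtranclp_trans)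
      with nuv show False by simp
    qed
    then show ?thesis using that uv by blast
  next
    case False
    then show ?thesis using that uv by blast
  qed
  define C where "C = {w \<in> {1..n}. (adj E)\<^sup>*\<^sup>* b w}"
  have finC: "finite C" unfolding C_def by simp
  have bC: "b \<in> C" unfolding C_def using b by simp
  have cardC: "card C > 0" using finC bC card_gt_0_iff by blast
  define c where "c = root k (1 / real (card C))"
  have c0: "c \<ge> 0" unfolding c_def by (intro real_root_ge_zero) simp
  have ck: "c ^ k = 1 / real (card C)" unfolding c_def using k by simp
  define x where "x = (\<lambda>w. if w \<in> C then c else 0)"
  have jC: "j \<notin> C" using b unfolding C_def by simp
  have xS: "x \<in> Sset n k j"
  proof -
    have "(\<Sum>i\<in>{1..n}. x i ^ k) = (\<Sum>i\<in>{1..n}. if i \<in> C then c ^ k else 0)"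
      unfolding x_def using k by (intro sum.cong) auto
    also have "\<dots> = (\<Sum>i\<in>{1..n} \<inter> C. c ^ k)" by (rule sum.inter_restrict[symmetric]) simp
    also have "{1..n} \<inter> C = C" unfolding C_def by auto
    also have "(\<Sum>i\<in>C. c ^ k) = 1" using ck cardC by simp
    finally show ?thesis unfolding Sset_def using c0 jC by (auto simp: x_def)
  qed
  have L0: "laplacian_form k E x = 0"
    unfolding laplacian_form_def
  proof (rule sum.neutral, rule ballI)
    fix e assume e: "e \<in> E"
    note ep = edge_props[OF H k e]
    show "(\<Sum>i\<in>e. x i ^ k) - real k * (\<Prod>i\<in>e. x i) = 0"
    proof (cases "\<exists>w\<in>e. w \<in> C")
      case True
      then obtain w where w: "w \<in> e" "w \<in> C" by blast
      have "e \<subseteq> C"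
      proof
        fix w' assume w': "w' \<in> e"
        have "adj E w w'" unfolding adj_def using e w w' by blast
        moreover have "(adj E)\<^sup>*\<^sup>* b w" using w unfolding C_def by simp
        ultimately have "(adj E)\<^sup>*\<^sup>* b w'" by simp
        then show "w' \<in> C" unfolding C_def using ep(1) w' by auto
      qed
      then have "\<forall>i\<in>e. x i = c" unfolding x_def by auto
      then have "(\<Sum>i\<in>e. x i ^ k) = real k * c ^ k" "(\<Prod>i\<in>e. x i) = c ^ k"
        using ep by simp_all
      then show ?thesis by simp
    next
      case False
      then have "\<forall>i\<in>e. x i = 0" unfolding x_def by auto
      then have "(\<Sum>i\<in>e. x i ^ k) = 0" "(\<Prod>i\<in>e. x i) = 0"
        using ep k by simp_all
      then show ?thesis by simp
    qed
  qed
  have "inv_perron n k E j \<le> laplacian_form k E x"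
    unfolding inv_perron_S by (rule cInf_lower) (use xS bdd[OF H k] in auto)
  then show ?thesis using L0 by simp
qed


lemma conn:
  assumes H: "uniform_hypergraph n k E" and k2: "k \<ge> 2" and n2: "n \<ge> 2"
    and con: "hg_connected n E" and j: "j \<in> {1..n}"
  shows "inv_perron n k E j > 0"
proof -
  have k: "k \<ge> 1" using k2 by simp
  define Sc where "Sc = (\<lambda>i. if i \<in> {1..n} then {0..1::real} else {0})"
  define T where "T = {x. (\<forall>i. x i \<in> Sc i) \<and> (\<Sum>i\<in>{1..n}. x i ^ k) = 1 \<and> x j = 0}"
  have cPi: "compact (Pi UNIV Sc)"
  proof -
    have "compactin (product_topology (\<lambda>i. euclidean) UNIV) (PiE UNIV Sc)"
      unfolding compactin_PiE by (auto simp: Sc_def)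
    then show ?thesis by (simp add: euclidean_product_topology PiE_UNIV_domain)
  qed
  have cl1: "closed {x::nat \<Rightarrow> real. (\<Sum>i\<in>{1..n}. x i ^ k) = 1}"
    by (rule closed_Collect_eq) (intro continuous_intros)+
  have cl2: "closed {x::nat \<Rightarrow> real. x j = 0}"
    by (rule closed_Collect_eq) (intro continuous_intros)+
  have "T = Pi UNIV Sc \<inter> ({x. (\<Sum>i\<in>{1..n}. x i ^ k) = 1} \<inter> {x. x j = 0})"
    unfolding T_def by (auto simp: Pi_def)
  then have cT: "compact T" using cPi cl1 cl2 by (simp add: compact_Int_closed closed_Int)
  obtain j' where j': "j' \<in> {1..n}" "j' \<noteq> j"
  proof (cases "j = 1")
    case True then show ?thesis using that[of 2] n2 by auto
  next
    case False then show ?thesis using that[of 1] n2 by auto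
  qed
  have neT: "T \<noteq> {}"
  proof -
    define y where "y = (\<lambda>i. if i = j' then 1 else (0::real))"
    have "(\<Sum>i\<in>{1..n}. y i ^ k) = (\<Sum>i\<in>{1..n}. if i = j' then 1 else 0)"
      unfolding y_def using k by (intro sum.cong) auto
    also have "\<dots> = 1" using j' by simp
    finally have "y \<in> T" unfolding T_def Sc_def using j' by (auto simp: y_def)
    then show ?thesis by blast
  qed
  have cont: "continuous_on T (laplacian_form k E)"
    unfolding laplacian_form_def by (intro continuous_intros)
  obtain x0 where x0: "x0 \<in> T" "\<forall>y\<in>T. laplacian_form k E x0 \<le> laplacian_form k E y"
    using continuous_attains_inf[OF cT neT cont] by blast
  have x0nn: "\<forall>i\<in>{1..n}. x0 i \<ge> 0" using x0(1) unfolding T_def Sc_def by (auto split: if_splits)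
  have eq: "inv_perron n k E j = laplacian_form k E x0"
    unfolding inv_perron_S
  proof (rule cInf_eq_minimum)
    show "laplacian_form k E x0 \<in> laplacian_form k E ` Sset n k j"
      using x0(1) x0nn unfolding T_def Sset_def by auto
    fix z assume "z \<in> laplacian_form k E ` Sset n k j"
    then obtain y where y: "y \<in> Sset n k j" "z = laplacian_form k E y" by blast
    have ynn: "\<forall>i\<in>{1..n}. y i \<ge> 0" and ys: "(\<Sum>i\<in>{1..n}. y i ^ k) = 1" and yj: "y j = 0"
      using y(1) unfolding Sset_def by auto
    define y' where "y' = (\<lambda>i. if i \<in> {1..n} then y i else 0)"
    have "y' \<in> T" unfolding T_def
    proof (intro CollectI conjI allI)
      fix i
      show "y' i \<in> Sc i"
      proof (cases "i \<in> {1..n}")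
        case True
        have "y i ^ k \<le> (\<Sum>i\<in>{1..n}. y i ^ k)"
          by (rule member_le_sum) (use True ynn in auto)
        then have "y i ^ k \<le> 1" using ys by simp
        then have "y i \<le> 1"
          by (metis k not_le one_less_power not_one_le_zero le_less_trans less_le_trans
              linorder_not_less zero_less_one le_numeral_extra(2) Suc_le_eq One_nat_def)
        then show ?thesis using True ynn by (simp add: y'_def Sc_def)
      next
        case False then show ?thesis by (auto simp: y'_def Sc_def)
      qed
    next
      show "(\<Sum>i\<in>{1..n}. y' i ^ k) = 1" using ys by (simp add: y'_def)
    next
      show "y' j = 0" using yj by (simp add: y'_def)
    qed
    moreover have "laplacian_form k E y' = laplacian_form k E y"
      unfolding laplacian_form_def
    proof (rule sum.cong[OF refl])
      fix e assume e: "e \<in> E"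
      then have "e \<subseteq> {1..n}" using edge_props[OF H k e] by simp
      then have "\<forall>i\<in>e. y' i = y i" by (auto simp: y'_def)
      then show "(\<Sum>i\<in>e. y' i ^ k) - real k * (\<Prod>i\<in>e. y' i) = (\<Sum>i\<in>e. y i ^ k) - real k * (\<Prod>i\<in>e. y i)"
        by simp
    qed
    ultimately show "laplacian_form k E x0 \<le> z" using x0(2) y(2) by metis
  qed
  have "laplacian_form k E x0 > 0"
  proof (rule ccontr)
    assume "\<not> laplacian_form k E x0 > 0"
    then have L0: "laplacian_form k E x0 = 0" using lap_nonneg[OF H k x0nn] by simp
    have tz: "\<forall>e\<in>E. (\<Sum>i\<in>e. x0 i ^ k) - real k * (\<Prod>i\<in>e. x0 i) = 0"
      using L0 unfolding laplacian_form_def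
      by (subst (asm) sum_nonneg_eq_0_iff[OF finE[OF H]]) (use term_nonneg[OF H k _ x0nn] in auto)
    have const: "\<forall>e\<in>E. \<forall>a\<in>e. \<forall>b\<in>e. x0 a = x0 b"
    proof (intro ballI, rule ccontr)
      fix e a b assume e: "e \<in> E" and ab: "a \<in> e" "b \<in> e" and ne: "x0 a \<noteq> x0 b"
      note ep = edge_props[OF H k e]
      have "real k * (\<Prod>i\<in>e. x0 i) < (\<Sum>i\<in>e. x0 i ^ k)"
        by (rule amgm_strict[OF ep(3) ep(2) k _ ab ne]) (use ep(1) x0nn in auto)
      then show False using tz e by fastforce
    qed
    have z: "x0 i = 0" if i: "i \<in> {1..n}" for i
    proof -
      obtain vs es where p: "hg_path E vs es" "hd vs = j" "last vs = i"
        using con j i unfolding hg_connected_def by blast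
      have "x0 (last vs) = x0 (hd vs)" by (rule path_const[OF p(1) const])
      then show ?thesis using p x0(1) unfolding T_def by simp
    qed
    have "(\<Sum>i\<in>{1..n}. x0 i ^ k) = 0" using z k by simp
    then show False using x0(1) unfolding T_def by simp
  qed
  then show ?thesis using eq by simp
qed


theorem theorem3p1:
  fixes n k :: nat and E :: "nat set set"
  assumes "uniform_hypergraph n k E" and "k \<ge> 2" and "n \<ge> 2"
  shows "(hg_connected n E \<longleftrightarrow> (\<forall>j\<in>{1..n}. inv_perron n k E j > 0))
       \<and> ((\<forall>j\<in>{1..n}. inv_perron n k E j > 0) \<longleftrightarrow> (\<exists>j\<in>{1..n}. inv_perron n k E j > 0))"
proof -
  have c1: "\<forall>j\<in>{1..n}. inv_perron n k E j > 0" if "hg_connected n E"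
    using conn[OF assms that] by blast
  have c2: "hg_connected n E" if "\<exists>j\<in>{1..n}. inv_perron n k E j > 0"
  proof (rule ccontr)
    assume "\<not> hg_connected n E"
    then have "\<forall>j. inv_perron n k E j \<le> 0" using disc[OF assms(1,2)] by blast
    then show False using that by (meson not_le)
  qed
  have one: "1 \<in> {1..n}" using assms(3) by simp
  show ?thesis using c1 c2 one by blast
qed

end
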